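(* For all $x\in\mathbb{C}\setminus\{0,\pm2i,\pm\sqrt2\,i\}$ and all integers $n\ge0$, \[ \sum_{k=0}^n\Big(\frac{2}{x^2+2}\Big)^kL_{2k}(x)=\frac{2^{n+1}}{x(x^2+2)^n}F_{2n+2}(x) \] and \[ \sum_{k=0}^n\Big(\frac{2}{x^2+2}\Big)^kF_{2k}(x)=\frac{x^2+2}{x(x^2+4)}\bigg(\Big(\frac{2}{x^2+2}\Big)^{n+1}L_{2n+2}(x)-2\bigg). \]
   Context: The Fibonacci polynomials $F_n(x)$ and Lucas polynomials $L_n(x)$ are defined by $F_0(x)=0$, $F_1(x)=1$, $L_0(x)=2$, $L_1(x)=x$ and $W_n(x)=xW_{n-1}(x)+W_{n-2}(x)$ for $n\ge2$ (for $W=F$ and $W=L$). Here $i=\sqrt{-1}$. *)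

theory Defs
  imports Complex_Main
begin

fun fibpoly :: "nat \<Rightarrow> complex \<Rightarrow> complex" where
  "fibpoly 0 x = 0"
| "fibpoly (Suc 0) x = 1"
| "fibpoly (Suc (Suc n)) x = x * fibpoly (Suc n) x + fibpoly n x"

fun lucpoly :: "nat \<Rightarrow> complex \<Rightarrow> complex" where
  "lucpoly 0 x = 2"
| "lucpoly (Suc 0) x = x"
| "lucpoly (Suc (Suc n)) x = x * lucpoly (Suc n) x + lucpoly n x"

end

theory Submission
  imports Defs
begin

lemma idF: "2 * fibpoly (m+2) x = (x^2+2) * fibpoly m x + x * lucpoly m x"
proof (induction m rule: less_induct)
  case (less m)
  show ?case
  proof (cases m)
    case 0 then show ?thesis by (simp add: power2_eq_square)
  next
    case (Suc k) note k = Suc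
    show ?thesis
    proof (cases k)
      case 0 then show ?thesis using k by (simp add: power2_eq_square algebra_simps)
    next
      case (Suc j)
      have a: "2 * fibpoly (j+2) x = (x^2+2) * fibpoly j x + x * lucpoly j x" using less k Suc by simp
      have b: "2 * fibpoly (j+3) x = (x^2+2) * fibpoly (j+1) x + x * lucpoly (j+1) x"
        using less[of "j+1"] k Suc by (simp add: numeral_3_eq_3)
      have r1: "fibpoly (j+4) x = x * fibpoly (j+3) x + fibpoly (j+2) x"
        by (simp add: eval_nat_numeral)
      have r2: "fibpoly (j+2) x = x * fibpoly (j+1) x + fibpoly j x" by (simp add: eval_nat_numeral)
      have r3: "lucpoly (j+2) x = x * lucpoly (j+1) x + lucpoly j x" by (simp add: eval_nat_numeral)
      have "2 * fibpoly (j+4) x = x * (2 * fibpoly (j+3) x) + 2 * fibpoly (j+2) x"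
        using r1 by (simp add: algebra_simps)
      also have "\<dots> = x * ((x^2+2) * fibpoly (j+1) x + x * lucpoly (j+1) x) + ((x^2+2) * fibpoly j x + x * lucpoly j x)"
        using a b by simp
      also have "\<dots> = (x^2+2) * (x * fibpoly (j+1) x + fibpoly j x) + x * (x * lucpoly (j+1) x + lucpoly j x)"
        by (simp add: algebra_simps)
      also have "\<dots> = (x^2+2) * fibpoly (j+2) x + x * lucpoly (j+2) x" using r2 r3 by simp
      finally have "2 * fibpoly (j+4) x = (x^2+2) * fibpoly (j+2) x + x * lucpoly (j+2) x" .
      then show ?thesis using k Suc by (simp add: eval_nat_numeral)
    qed
  qed
qed

lemma idL: "2 * lucpoly (m+2) x - (x^2+2) * lucpoly m x = x * (x^2+4) * fibpoly m x"
proof (induction m rule: less_induct)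
  case (less m)
  show ?case
  proof (cases m)
    case 0 then show ?thesis by (simp add: power2_eq_square)
  next
    case (Suc k) note k = Suc
    show ?thesis
    proof (cases k)
      case 0 then show ?thesis using k by (simp add: power2_eq_square algebra_simps)
    next
      case (Suc j)
      have a: "2 * lucpoly (j+2) x - (x^2+2) * lucpoly j x = x * (x^2+4) * fibpoly j x" using less k Suc by simp
      have b: "2 * lucpoly (j+3) x - (x^2+2) * lucpoly (j+1) x = x * (x^2+4) * fibpoly (j+1) x"
        using less[of "j+1"] k Suc by (simp add: numeral_3_eq_3)
      have r1: "lucpoly (j+4) x = x * lucpoly (j+3) x + lucpoly (j+2) x"
        by (simp add: eval_nat_numeral)
      have r2: "fibpoly (j+2) x = x * fibpoly (j+1) x + fibpoly j x" by (simp add: eval_nat_numeral)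
      have r3: "lucpoly (j+2) x = x * lucpoly (j+1) x + lucpoly j x" by (simp add: eval_nat_numeral)
      have "2 * lucpoly (j+4) x - (x^2+2) * lucpoly (j+2) x
         = x * (2 * lucpoly (j+3) x - (x^2+2) * lucpoly (j+1) x) + (2 * lucpoly (j+2) x - (x^2+2) * lucpoly j x)"
        using r1 r3 by (simp add: algebra_simps)
      also have "\<dots> = x * (x * (x^2+4) * fibpoly (j+1) x) + x * (x^2+4) * fibpoly j x"
        using a b by simp
      also have "\<dots> = x * (x^2+4) * (x * fibpoly (j+1) x + fibpoly j x)"
        by (simp add: algebra_simps)
      also have "\<dots> = x * (x^2+4) * fibpoly (j+2) x" using r2 by simp
      finally have "2 * lucpoly (j+4) x - (x^2+2) * lucpoly (j+2) x = x * (x^2+4) * fibpoly (j+2) x" .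
      then show ?thesis using k Suc by (simp add: eval_nat_numeral)
    qed
  qed
qed

lemma stepA:
  fixes x c F L :: complex
  assumes "x \<noteq> 0" "c \<noteq> 0"
  shows "2^(n+1) / (x * c^n) * F + (2 / c)^(n+1) * L = 2^(Suc n+1) / (x * c^Suc n) * ((c * F + x * L) / 2)"
proof -
  define P where "P = c^n"
  have P: "P \<noteq> 0" using assms by (simp add: P_def)
  define Q where "Q = (2::complex)^n"
  have "(2 / c)^(n+1) = 2 * Q / (c * P)" by (simp add: P_def Q_def power_divide)
  moreover have "(2::complex)^(n+1) = 2 * Q" "(2::complex)^(Suc n+1) = 4 * Q" "c^Suc n = c * P" by (simp_all add: P_def Q_def)
  moreover have "2 * Q / (x * P) * F + 2 * Q / (c * P) * L = 4 * Q / (x * (c * P)) * ((c * F + x * L) / 2)"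
    using assms P by (simp add: field_simps)
  ultimately show ?thesis by (simp add: P_def)
qed

lemma stepB:
  fixes x c d F L L2 :: complex
  assumes "x \<noteq> 0" "c \<noteq> 0" "d \<noteq> 0" and id: "2 * L2 - c * L = x * d * F"
  shows "c / (x * d) * ((2 / c)^(n+1) * L - 2) + (2 / c)^(n+1) * F = c / (x * d) * ((2 / c)^(Suc n+1) * L2 - 2)"
proof -
  define R where "R = (2 / c)^(n+1)"
  have R2: "(2 / c)^(Suc n+1) = 2 / c * R" by (simp add: R_def)
  have F: "F = (2 * L2 - c * L) / (x * d)" using id assms by (simp add: field_simps)
  show ?thesis unfolding R2 R_def[symmetric] F using assms(1-3) by (simp add: field_simps)
qed

lemma sq_fact:
  fixes x a :: complex
  assumes "x \<noteq> a" "x \<noteq> - a"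
  shows "x * x - a * a \<noteq> 0"
proof
  assume "x * x - a * a = 0"
  then have "(x - a) * (x + a) = 0" by (simp add: algebra_simps)
  then have "x - a = 0 \<or> x + a = 0" by simp
  then show False using assms by (auto simp: add_eq_0_iff2)
qed
lemma s2: "complex_of_real (sqrt 2) * complex_of_real (sqrt 2) = 2"
  by (simp flip: of_real_mult)
lemma aa: "(complex_of_real (sqrt 2) * \<i>) * (complex_of_real (sqrt 2) * \<i>) = -2"
proof -
  have "(complex_of_real (sqrt 2) * \<i>) * (complex_of_real (sqrt 2) * \<i>) = (complex_of_real (sqrt 2) * complex_of_real (sqrt 2)) * (\<i> * \<i>)" by (simp only: mult_ac)
  also have "\<dots> = -2" by (simp only: s2) simp
  finally show ?thesis .
qed
lemma c_nz:
  fixes x :: complex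
  assumes "x \<noteq> complex_of_real (sqrt 2) * \<i>" and "x \<noteq> - complex_of_real (sqrt 2) * \<i>"
  shows "x^2 + 2 \<noteq> 0"
proof -
  have "x * x - (complex_of_real (sqrt 2) * \<i>) * (complex_of_real (sqrt 2) * \<i>) \<noteq> 0"
    by (rule sq_fact) (use assms in auto)
  then show ?thesis by (simp only: aa power2_eq_square) simp
qed
lemma d_nz:
  fixes x :: complex
  assumes "x \<noteq> 2 * \<i>" and "x \<noteq> - 2 * \<i>"
  shows "x^2 + 4 \<noteq> 0"
proof -
  have aa: "(2 * \<i>) * (2 * \<i>) = (-4::complex)" by simp
  have "x * x - (2 * \<i>) * (2 * \<i>) \<noteq> 0" using sq_fact[of x "2*\<i>"] assms by simp
  then show ?thesis using aa by (simp add: power2_eq_square)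
qed
lemma dm: "c \<noteq> 0 \<Longrightarrow> (2::complex) / c * c = 2" by simp

theorem corollary9:
  fixes x :: complex and n :: nat
  assumes "x \<noteq> 0" and "x \<noteq> 2 * \<i>" and "x \<noteq> - 2 * \<i>"
    and "x \<noteq> complex_of_real (sqrt 2) * \<i>" and "x \<noteq> - complex_of_real (sqrt 2) * \<i>"
  shows "((\<Sum>k=0..n. (2 / (x^2 + 2))^k * lucpoly (2*k) x)
           = 2^(n+1) / (x * (x^2 + 2)^n) * fibpoly (2*n+2) x)
    \<and> ((\<Sum>k=0..n. (2 / (x^2 + 2))^k * fibpoly (2*k) x)
           = (x^2 + 2) / (x * (x^2 + 4)) * ((2 / (x^2 + 2))^(n+1) * lucpoly (2*n+2) x - 2))"
proof -
  have c: "x^2 + 2 \<noteq> 0" using c_nz assms(4,5) by blast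
  have d: "x^2 + 4 \<noteq> 0" using d_nz assms(2,3) by blast
  note x = assms(1)
  have A: "(\<Sum>k=0..n. (2 / (x^2 + 2))^k * lucpoly (2*k) x)
           = 2^(n+1) / (x * (x^2 + 2)^n) * fibpoly (2*n+2) x"
  proof (induction n)
    case 0 then show ?case using x by simp
  next
    case (Suc n)
    have e: "2*Suc n+2 = (2*n+2)+2" by simp
    have id: "((x^2+2) * fibpoly (2*n+2) x + x * lucpoly (2*n+2) x) / 2 = fibpoly (2*Suc n+2) x"
      using idF[of "2*n+2" x] unfolding e by (simp del: fibpoly.simps lucpoly.simps add: mult.commute)
    have "(\<Sum>k=0..Suc n. (2 / (x^2 + 2))^k * lucpoly (2*k) x)
       = 2^(n+1) / (x * (x^2 + 2)^n) * fibpoly (2*n+2) x + (2 / (x^2 + 2))^(n+1) * lucpoly (2*n+2) x"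
      by (simp del: fibpoly.simps lucpoly.simps add: Suc.IH)
    also have "\<dots> = 2^(Suc n+1) / (x * (x^2 + 2)^Suc n) * (((x^2+2) * fibpoly (2*n+2) x + x * lucpoly (2*n+2) x) / 2)"
      by (rule stepA[OF x c])
    also have "\<dots> = 2^(Suc n+1) / (x * (x^2 + 2)^Suc n) * fibpoly (2*Suc n+2) x"
      by (simp only: id)
    finally show ?case .
  qed
  have B: "(\<Sum>k=0..n. (2 / (x^2 + 2))^k * fibpoly (2*k) x)
           = (x^2 + 2) / (x * (x^2 + 4)) * ((2 / (x^2 + 2))^(n+1) * lucpoly (2*n+2) x - 2)"
  proof (induction n)
    case 0 
    have "(2 / (x^2 + 2))^(0+1) * (x^2+2) - 2 = 0"
    proof -
      have "(2 / (x^2 + 2))^(0+1) = 2 / (x^2 + 2)" by simp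
      then show ?thesis using dm[OF c] by simp
    qed
    then have "(x^2 + 2) / (x * (x^2 + 4)) * ((2 / (x^2 + 2))^(0+1) * (x^2+2) - 2) = 0"
      by simp
    moreover have "lucpoly (2*0+2) x = x^2+2" by (simp add: power2_eq_square)
    ultimately show ?case by simp
  next
    case (Suc n)
    have e: "2*Suc n+2 = (2*n+2)+2" by simp
    have id: "2 * lucpoly (2*Suc n+2) x - (x^2+2) * lucpoly (2*n+2) x = x * (x^2+4) * fibpoly (2*n+2) x"
      using idL[of "2*n+2" x] unfolding e by (simp del: fibpoly.simps lucpoly.simps)
    have "(\<Sum>k=0..Suc n. (2 / (x^2 + 2))^k * fibpoly (2*k) x)
       = (x^2 + 2) / (x * (x^2 + 4)) * ((2 / (x^2 + 2))^(n+1) * lucpoly (2*n+2) x - 2)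
         + (2 / (x^2 + 2))^(n+1) * fibpoly (2*n+2) x"
      by (simp del: fibpoly.simps lucpoly.simps add: Suc.IH)
    also have "\<dots> = (x^2 + 2) / (x * (x^2 + 4)) * ((2 / (x^2 + 2))^(Suc n+1) * lucpoly (2*Suc n+2) x - 2)"
      by (rule stepB[OF x c d id])
    finally show ?case .
  qed
  show ?thesis using A B by blast
qed

end
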